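(* If $t$ is a positive integer multiple of $3$, then there is no nonzero $z\in\mathcal O_{\mathbb{Q}(\sqrt{-3})}$ that is $2$-powerfully unitarily $t$-perfect, i.e. with $I_2^*(z)=t$.
   Context: $\mathcal O_{\mathbb{Q}(\sqrt{-3})}=\mathbb{Z}[\frac{1+\sqrt{-3}}{2}]$ is a unique factorization domain. $|z|=\sqrt{z\bar z}$, $\arg(z)\in[0,2\pi)$. Let $A$ be the set of nonzero $z\in\mathcal O_{\mathbb{Q}(\sqrt{-3})}$ with $0\le \arg(z)<\pi/3$. Two elements are relatively prime if they have no nonunit common divisor. For nonzero $x,z$, write $x\Diamond z$ iff $x\in A$, $x\mid z$, and $x$ is relatively prime to $z/x$. For $m\in\mathbb{Z}$ define $\delta_m^*(z)=\sum_{x\Diamond z}|x|^m$ and $I_m^*(z)=\delta_m^*(z)/|z|^m$. *)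

theory Defs
  imports "HOL-Analysis.Analysis"
begin

definition omega :: complex where
  "omega = (1 + \<i> * complex_of_real (sqrt 3)) / 2"

definition Eis :: "complex set" where
  "Eis = {of_int a + of_int b * omega | a b :: int. True}"

definition eis_dvd :: "complex \<Rightarrow> complex \<Rightarrow> bool" where
  "eis_dvd x z \<longleftrightarrow> x \<in> Eis \<and> z \<in> Eis \<and> (\<exists>y\<in>Eis. z = x * y)"

definition eis_unit :: "complex \<Rightarrow> bool" where
  "eis_unit u \<longleftrightarrow> eis_dvd u 1"

definition eis_coprime :: "complex \<Rightarrow> complex \<Rightarrow> bool" where
  "eis_coprime x y \<longleftrightarrow> (\<forall>d. eis_dvd d x \<and> eis_dvd d y \<longrightarrow> eis_unit d)"

definition arg02pi :: "complex \<Rightarrow> real" where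
  "arg02pi z = (if Arg z < 0 then Arg z + 2 * pi else Arg z)"

definition EisA :: "complex set" where
  "EisA = {z \<in> Eis. z \<noteq> 0 \<and> 0 \<le> arg02pi z \<and> arg02pi z < pi / 3}"

definition unitary_div :: "complex \<Rightarrow> complex \<Rightarrow> bool" where
  "unitary_div x z \<longleftrightarrow> x \<in> EisA \<and> eis_dvd x z \<and> eis_coprime x (z / x)"

definition delta_star :: "int \<Rightarrow> complex \<Rightarrow> real" where
  "delta_star m z = (\<Sum>x\<in>{x. unitary_div x z}. cmod x powi m)"

definition I_star :: "int \<Rightarrow> complex \<Rightarrow> real" where
  "I_star m z = delta_star m z / (cmod z powi m)"

end

theory Submission
  imports Defs
begin



lemma omega_Re: "Re omega = 1/2" and omega_Im: "Im omega = sqrt 3 / 2"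
  by (simp_all add: omega_def)

lemma omega_sq: "omega * omega = omega - 1"
  by (simp add: omega_def complex_eq_iff power2_eq_square field_simps)

lemma cnj_omega: "cnj omega = 1 - omega"
  by (simp add: omega_def complex_eq_iff)

lemma Eis_iff: "z \<in> Eis \<longleftrightarrow> (\<exists>a b::int. z = of_int a + of_int b * omega)"
  by (auto simp: Eis_def)

lemma Eis_int [simp]: "of_int n \<in> Eis"
  unfolding Eis_iff by (rule exI[of _ n], rule exI[of _ 0], simp)

lemma Eis_0 [simp]: "0 \<in> Eis" and Eis_1 [simp]: "1 \<in> Eis"
  using Eis_int[of 0] Eis_int[of 1] by simp_all

lemma Eis_omega [simp]: "omega \<in> Eis"
  unfolding Eis_iff by (rule exI[of _ 0], rule exI[of _ 1], simp)

lemma Eis_add [simp]: "x \<in> Eis \<Longrightarrow> y \<in> Eis \<Longrightarrow> x + y \<in> Eis"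
  unfolding Eis_iff
proof (elim exE)
  fix a b c d :: int assume "x = of_int a + of_int b * omega" "y = of_int c + of_int d * omega"
  then show "\<exists>a b::int. x + y = of_int a + of_int b * omega"
    by (intro exI[of _ "a+c"] exI[of _ "b+d"]) (simp add: algebra_simps)
qed

lemma Eis_uminus [simp]: "x \<in> Eis \<Longrightarrow> - x \<in> Eis"
  unfolding Eis_iff
proof (elim exE)
  fix a b :: int assume "x = of_int a + of_int b * omega"
  then show "\<exists>a b::int. - x = of_int a + of_int b * omega"
    by (intro exI[of _ "-a"] exI[of _ "-b"]) (simp add: algebra_simps)
qed

lemma Eis_diff [simp]: "x \<in> Eis \<Longrightarrow> y \<in> Eis \<Longrightarrow> x - y \<in> Eis"
  using Eis_add[of x "-y"] by simp

lemma Eis_mult [simp]: "x \<in> Eis \<Longrightarrow> y \<in> Eis \<Longrightarrow> x * y \<in> Eis"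
  unfolding Eis_iff
proof (elim exE)
  fix a b c d :: int assume "x = of_int a + of_int b * omega" "y = of_int c + of_int d * omega"
  moreover have "(of_int a + of_int b * omega) * (of_int c + of_int d * omega)
      = of_int (a*c - b*d) + of_int (a*d+b*c+b*d) * omega"
  proof -
    have e1: "(of_int a + of_int b * omega) * (of_int c + of_int d * omega)
      = of_int a * of_int c + (of_int a * of_int d + of_int b * of_int c) * omega + of_int b * of_int d * (omega * omega)"
      by (simp add: algebra_simps)
    show ?thesis unfolding e1 omega_sq by (simp add: algebra_simps)
  qed
  ultimately show "\<exists>a b::int. x * y = of_int a + of_int b * omega"
    by blast
qed

lemma Eis_cnj [simp]: "x \<in> Eis \<Longrightarrow> cnj x \<in> Eis"
  unfolding Eis_iff
proof (elim exE)
  fix a b :: int assume "x = of_int a + of_int b * omega"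
  then show "\<exists>a b::int. cnj x = of_int a + of_int b * omega"
    by (intro exI[of _ "a+b"] exI[of _ "-b"]) (simp add: cnj_omega algebra_simps)
qed

lemma Eis_power [simp]: "x \<in> Eis \<Longrightarrow> x ^ n \<in> Eis"
  by (induction n) auto

lemma norm_omega_real: "(cmod (of_real x + of_real y * omega))^2 = x*x + x*y + y*y"
proof -
  have r: "Re (of_real x + of_real y * omega) = x + y/2" by (simp add: omega_Re omega_Im)
  have i: "Im (of_real x + of_real y * omega) = y * sqrt 3 / 2" by (simp add: omega_Re omega_Im)
  have s: "sqrt 3 * sqrt 3 = 3" by simp
  have "(x + y/2)^2 + (y * sqrt 3 / 2)^2 = x*x + x*y + y*y"
    unfolding power2_eq_square by (simp add: algebra_simps s)
  then show ?thesis unfolding cmod_power2 r i .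
qed

definition nrm :: "complex \<Rightarrow> int" where "nrm z = round ((cmod z)^2)"

lemma norm_int: "(cmod (of_int a + of_int b * omega))^2 = of_int (a*a+a*b+b*b)"
  using norm_omega_real[of "of_int a" "of_int b"] by simp

lemma nrm_repr: "z = of_int a + of_int b * omega \<Longrightarrow> nrm z = a*a + a*b + b*b"
  by (simp only: nrm_def norm_int round_of_int)

lemma nrm_eq: "z \<in> Eis \<Longrightarrow> (cmod z)^2 = of_int (nrm z)"
proof -
  assume "z \<in> Eis" then obtain a b :: int where z: "z = of_int a + of_int b * omega" by (auto simp: Eis_iff)
  have "(cmod z)^2 = of_int (a*a + a*b + b*b)"
    using norm_int z by simp
  then show ?thesis using nrm_repr[OF z] by simp
qed

lemma nrm_nonneg: "z \<in> Eis \<Longrightarrow> nrm z \<ge> 0"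
proof -
  assume z: "z \<in> Eis"
  have "0 \<le> (cmod z)^2" by simp
  then have "0 \<le> (of_int (nrm z)::real)" using nrm_eq[OF z] by simp
  then show ?thesis by simp
qed

lemma nrm_pos: "z \<in> Eis \<Longrightarrow> z \<noteq> 0 \<Longrightarrow> nrm z > 0"
proof -
  assume z: "z \<in> Eis" "z \<noteq> 0"
  have "0 < (cmod z)^2" using z(2) by simp
  then have "0 < (of_int (nrm z)::real)" using nrm_eq[OF z(1)] by simp
  then show ?thesis by simp
qed

lemma nrm_mult: "x \<in> Eis \<Longrightarrow> y \<in> Eis \<Longrightarrow> nrm (x*y) = nrm x * nrm y"
proof -
  assume xy: "x \<in> Eis" "y \<in> Eis"
  have "(of_int (nrm (x*y))::real) = (cmod (x*y))^2" using nrm_eq[of "x*y"] xy by simp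
  also have "\<dots> = (cmod x)^2 * (cmod y)^2" by (simp add: norm_mult power_mult_distrib)
  also have "\<dots> = of_int (nrm x * nrm y)" using nrm_eq[OF xy(1)] nrm_eq[OF xy(2)] by simp
  finally show ?thesis by (simp only: of_int_eq_iff)
qed

lemma nrm_mod3: "z \<in> Eis \<Longrightarrow> nrm z mod 3 = 0 \<or> nrm z mod 3 = 1"
proof -
  assume "z \<in> Eis" then obtain a b :: int where z: "z = of_int a + of_int b * omega" by (auto simp: Eis_iff)
  define r where "r = a mod 3"
  define s where "s = b mod 3"
  define p where "p = a div 3"
  define q where "q = b div 3"
  have a: "a = 3*p + r" and b: "b = 3*q + s" by (simp_all add: r_def s_def p_def q_def)
  have e: "a*a + a*b + b*b = (r*r + r * s + s * s) + 3 * (3*p*p + 2*p*r + 3*p*q + p * s + q*r + 3*q*q + 2*q * s)"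
    unfolding a b by (simp add: algebra_simps)
  have r: "r = 0 \<or> r = 1 \<or> r = 2" and s: "s = 0 \<or> s = 1 \<or> s = 2" unfolding r_def s_def by auto
  have "(a*a + a*b + b*b) mod 3 = (r*r + r * s + s * s) mod 3" unfolding e by (rule mod_mult_self2)
  then show ?thesis unfolding nrm_repr[OF z] using r s by auto
qed




lemma nrm_1 [simp]: "nrm 1 = 1"
  using nrm_repr[of 1 1 0] by simp

lemma unit_iff: "eis_unit u \<longleftrightarrow> u \<in> Eis \<and> cmod u = 1"
proof
  assume "eis_unit u"
  then obtain y where u: "u \<in> Eis" and y: "y \<in> Eis" and e: "1 = u * y"
    by (auto simp: eis_unit_def eis_dvd_def)
  have "nrm u * nrm y = 1" using nrm_mult[OF u y] e by simp
  then have "nrm u = 1" using nrm_nonneg[OF u] nrm_nonneg[OF y] by (auto simp: zmult_eq_1_iff)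
  then have "(cmod u)^2 = 1" using nrm_eq[OF u] by simp
  then have "cmod u = 1 \<or> cmod u = -1" by (simp add: power2_eq_1_iff)
  then have "cmod u = 1" using norm_ge_zero[of u] by linarith
  then show "u \<in> Eis \<and> cmod u = 1" using u by simp
next
  assume a: "u \<in> Eis \<and> cmod u = 1"
  have "u * cnj u = 1" using complex_norm_square[of u] a by simp
  then show "eis_unit u" using a unfolding eis_unit_def eis_dvd_def
    by (intro conjI bexI[of _ "cnj u"]) auto
qed

lemma unit_nrm: "u \<in> Eis \<Longrightarrow> eis_unit u \<longleftrightarrow> nrm u = 1"
proof -
  assume u: "u \<in> Eis"
  have "eis_unit u \<longleftrightarrow> cmod u = 1" using u unit_iff by simp
  also have "\<dots> \<longleftrightarrow> (cmod u)^2 = 1"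
  proof
    assume "(cmod u)^2 = 1"
    then have "cmod u = 1 \<or> cmod u = -1" by (simp add: power2_eq_1_iff)
    then show "cmod u = 1" using norm_ge_zero[of u] by linarith
  qed simp
  also have "\<dots> \<longleftrightarrow> nrm u = 1" using nrm_eq[OF u] by simp
  finally show ?thesis .
qed

lemma unit_Eis: "eis_unit u \<Longrightarrow> u \<in> Eis" by (simp add: unit_iff)
lemma unit_nz: "eis_unit u \<Longrightarrow> u \<noteq> 0" by (auto simp: unit_iff)
lemma unit_1 [simp]: "eis_unit 1" by (simp add: unit_iff)
lemma unit_mult: "eis_unit u \<Longrightarrow> eis_unit v \<Longrightarrow> eis_unit (u * v)"
  by (simp add: unit_iff norm_mult)
lemma unit_inv: "eis_unit u \<Longrightarrow> \<exists>v. eis_unit v \<and> u * v = 1"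
proof -
  assume u: "eis_unit u"
  then have "u * cnj u = 1" using complex_norm_square[of u] by (simp add: unit_iff)
  then show ?thesis using u by (intro exI[of _ "cnj u"]) (simp add: unit_iff)
qed

lemma Eis_approx: "\<exists>q\<in>Eis. cmod (w - q) < 1"
proof -
  define y where "y = Im w * 2 / sqrt 3"
  define x where "x = Re w - y/2"
  have s: "sqrt 3 \<noteq> 0" by simp
  have w: "w = of_real x + of_real y * omega"
    by (simp add: complex_eq_iff x_def y_def omega_Re omega_Im s)
  define dx where "dx = x - of_int (round x)"
  define dy where "dy = y - of_int (round y)"
  have dx: "\<bar>dx\<bar> \<le> 1/2" unfolding dx_def using of_int_round_abs_le[of x] by linarith
  have dy: "\<bar>dy\<bar> \<le> 1/2" unfolding dy_def using of_int_round_abs_le[of y] by linarith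
  let ?q = "of_int (round x) + of_int (round y) * omega :: complex"
  have q: "?q \<in> Eis" by (auto simp: Eis_iff)
  have wq: "w - ?q = of_real dx + of_real dy * omega"
    by (simp add: w dx_def dy_def algebra_simps)
  have "\<bar>dx\<bar>*\<bar>dx\<bar> \<le> (1/2)*(1/2)" by (rule mult_mono) (use dx in auto)
  then have a1: "dx*dx \<le> 1/4" by (simp add: abs_mult_self_eq)
  have "\<bar>dy\<bar>*\<bar>dy\<bar> \<le> (1/2)*(1/2)" by (rule mult_mono) (use dy in auto)
  then have a2: "dy*dy \<le> 1/4" by (simp add: abs_mult_self_eq)
  have "\<bar>dx\<bar>*\<bar>dy\<bar> \<le> (1/2)*(1/2)" by (rule mult_mono) (use dx dy in auto)
  then have a3: "\<bar>dx*dy\<bar> \<le> 1/4" by (simp add: abs_mult)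
  have lt: "(cmod (w - ?q))^2 < 1" unfolding wq norm_omega_real using a1 a2 a3 by linarith
  have "cmod (w - ?q) < 1"
  proof (rule ccontr)
    assume "\<not> cmod (w - ?q) < 1"
    then have "1 \<le> cmod (w - ?q)" by simp
    then have "1 \<le> (cmod (w - ?q))^2" by (rule one_le_power)
    then show False using lt by simp
  qed
  then show ?thesis using q by blast
qed

lemma Eis_divmod:
  assumes "a \<in> Eis" "b \<in> Eis" "b \<noteq> 0"
  shows "\<exists>q\<in>Eis. cmod (a - q*b) < cmod b"
proof -
  obtain q where q: "q \<in> Eis" "cmod (a/b - q) < 1" using Eis_approx by blast
  have "a - q*b = (a/b - q) * b" using assms(3) by (simp add: field_simps)
  then have "cmod (a - q*b) = cmod (a/b - q) * cmod b" by (simp add: norm_mult)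
  also have "\<dots> < cmod b" using q(2) assms(3) by simp
  finally show ?thesis using q(1) by blast
qed

lemma dvdI: "x \<in> Eis \<Longrightarrow> y \<in> Eis \<Longrightarrow> z = x * y \<Longrightarrow> eis_dvd x z"
  by (auto simp: eis_dvd_def)

lemma eis_gcd:
  assumes x: "x \<in> Eis" and y: "y \<in> Eis" and nz: "x \<noteq> 0"
  shows "\<exists>g s t. g \<in> Eis \<and> s \<in> Eis \<and> t \<in> Eis \<and> g = s*x + t*y \<and> g \<noteq> 0 \<and> eis_dvd g x \<and> eis_dvd g y"
proof -
  define P where "P g \<longleftrightarrow> (\<exists>s t. s \<in> Eis \<and> t \<in> Eis \<and> g = s*x + t*y \<and> g \<noteq> 0)" for g
  have "P x" unfolding P_def using nz by (intro exI[of _ 1] exI[of _ 0]) auto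
  then obtain g where Pg: "P g" and min: "\<And>h. P h \<Longrightarrow> nat (nrm g) \<le> nat (nrm h)"
    using ex_has_least_nat[of P x "\<lambda>g. nat (nrm g)"] by blast
  obtain s t where st: "s \<in> Eis" "t \<in> Eis" "g = s*x + t*y" "g \<noteq> 0" using Pg P_def by blast
  have g: "g \<in> Eis" using st x y by simp
  have dv: "eis_dvd g w" if w: "w \<in> Eis" "\<exists>s' t'. s' \<in> Eis \<and> t' \<in> Eis \<and> w = s'*x + t'*y" for w
  proof -
    obtain s' t' where w': "s' \<in> Eis" "t' \<in> Eis" "w = s'*x + t'*y" using w by blast
    obtain q where q: "q \<in> Eis" "cmod (w - q*g) < cmod g" using Eis_divmod[OF w(1) g st(4)] by blast
    have r: "w - q*g = (s' - q * s)*x + (t' - q*t)*y" using w'(3) st(3) by (simp add: algebra_simps)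
    have "w - q*g = 0"
    proof (rule ccontr)
      assume "w - q*g \<noteq> 0"
      then have "P (w - q*g)" unfolding P_def using r w' st q by (intro exI[of _ "s' - q * s"] exI[of _ "t' - q*t"]) auto
      then have "nat (nrm g) \<le> nat (nrm (w - q*g))" by (rule min)
      moreover have "(cmod (w - q*g))^2 < (cmod g)^2" using q(2) by (simp add: power_strict_mono)
      then have "nrm (w - q*g) < nrm g" using nrm_eq[of "w - q*g"] nrm_eq[OF g] w q g by simp
      ultimately show False using nrm_nonneg[of "w - q*g"] w q g by simp
    qed
    then show ?thesis using dvdI[OF g q(1)] w by (simp add: algebra_simps)
  qed
  have "eis_dvd g x" by (rule dv[OF x]) (rule exI[of _ 1], rule exI[of _ 0], simp)
  moreover have "eis_dvd g y" by (rule dv[OF y]) (rule exI[of _ 0], rule exI[of _ 1], simp)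
  ultimately show ?thesis using st g by blast
qed




lemma dvd_Eis: "eis_dvd a b \<Longrightarrow> a \<in> Eis \<and> b \<in> Eis" by (simp add: eis_dvd_def)

lemma dvd_trans': "eis_dvd a b \<Longrightarrow> eis_dvd b c \<Longrightarrow> eis_dvd a c"
  unfolding eis_dvd_def by (auto intro!: bexI[where P = "\<lambda>y. _ = _ * y"])

lemma dvd_refl': "a \<in> Eis \<Longrightarrow> eis_dvd a a"
  by (rule dvdI[of a 1]) auto

lemma dvd_multR: "eis_dvd a b \<Longrightarrow> c \<in> Eis \<Longrightarrow> eis_dvd a (b * c)"
  unfolding eis_dvd_def by (auto intro!: bexI[where P = "\<lambda>y. _ = _ * y"])

lemma dvd_multL: "eis_dvd a b \<Longrightarrow> c \<in> Eis \<Longrightarrow> eis_dvd a (c * b)"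
  using dvd_multR[of a b c] by (simp add: mult.commute)

lemma dvd_factorL: "a \<in> Eis \<Longrightarrow> b \<in> Eis \<Longrightarrow> eis_dvd a (a * b)"
  using dvdI[of a b "a * b"] by simp

lemma dvd_factorR: "a \<in> Eis \<Longrightarrow> b \<in> Eis \<Longrightarrow> eis_dvd b (a * b)"
  by (metis dvdI mult.commute)

lemma unit_dvd: "eis_unit u \<Longrightarrow> x \<in> Eis \<Longrightarrow> eis_dvd u x"
  using dvd_multR[of u 1 x] by (simp add: eis_unit_def)

lemma dvd_unit_is_unit: "eis_dvd d u \<Longrightarrow> eis_unit u \<Longrightarrow> eis_unit d"
  unfolding eis_unit_def by (rule dvd_trans')

lemma dvd_unit_mult: "eis_dvd d (u * x) \<Longrightarrow> eis_unit u \<Longrightarrow> x \<in> Eis \<Longrightarrow> eis_dvd d x"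
proof -
  assume d: "eis_dvd d (u * x)" and u: "eis_unit u" and x: "x \<in> Eis"
  obtain v where v: "eis_unit v" "u * v = 1" using unit_inv[OF u] by blast
  have "eis_dvd d (u * x * v)" using dvd_multR[OF d unit_Eis[OF v(1)]] .
  also have "u * x * v = x" using v(2) by (simp add: algebra_simps)
  finally show ?thesis .
qed

lemma coprime_sym: "eis_coprime x y \<Longrightarrow> eis_coprime y x"
  unfolding eis_coprime_def by blast

lemma coprime_dvd: "eis_coprime x y \<Longrightarrow> eis_dvd a x \<Longrightarrow> eis_dvd b y \<Longrightarrow> eis_coprime a b"
  unfolding eis_coprime_def using dvd_trans' by blast

lemma coprime_unit_left: "eis_coprime x y \<Longrightarrow> eis_unit u \<Longrightarrow> x \<in> Eis \<Longrightarrow> eis_coprime (u * x) y"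
  unfolding eis_coprime_def using dvd_unit_mult by blast

lemma coprime_unit_right: "eis_coprime x y \<Longrightarrow> eis_unit u \<Longrightarrow> y \<in> Eis \<Longrightarrow> eis_coprime x (u * y)"
  using coprime_unit_left coprime_sym by blast

lemma coprime_unit: "eis_unit u \<Longrightarrow> eis_coprime x u"
  unfolding eis_coprime_def using dvd_unit_is_unit by blast

lemma bezout_coprime:
  assumes "s \<in> Eis" "t \<in> Eis" "s * x + t * y = 1"
  shows "eis_coprime x y"
  unfolding eis_coprime_def
proof (intro allI impI)
  fix d assume "eis_dvd d x \<and> eis_dvd d y"
  then obtain x' y' where d: "d \<in> Eis" "x' \<in> Eis" "y' \<in> Eis" "x = d * x'" "y = d * y'"
    by (auto simp: eis_dvd_def)
  have "1 = d * (s * x' + t * y')" using assms(3) d by (simp add: algebra_simps)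
  then show "eis_unit d" unfolding eis_unit_def using d assms by (intro dvdI) auto
qed

lemma coprime_bezout:
  assumes x: "x \<in> Eis" and y: "y \<in> Eis" and nz: "x \<noteq> 0" and c: "eis_coprime x y"
  shows "\<exists>s\<in>Eis. \<exists>t\<in>Eis. s * x + t * y = 1"
proof -
  obtain g s t where g: "g \<in> Eis" "s \<in> Eis" "t \<in> Eis" "g = s * x + t * y" "eis_dvd g x" "eis_dvd g y"
    using eis_gcd[OF x y nz] by blast
  have "eis_unit g" using c g unfolding eis_coprime_def by blast
  then obtain v where v: "eis_unit v" "g * v = 1" using unit_inv by blast
  have "(v * s) * x + (v * t) * y = 1" using v(2) g(4) by (simp add: algebra_simps)
  then show ?thesis using g v unit_Eis by (intro bexI[of _ "v * s"] bexI[of _ "v * t"]) auto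
qed

lemma coprime_mult:
  assumes x: "x \<in> Eis" and y: "y \<in> Eis" and w: "w \<in> Eis" and nz: "x \<noteq> 0"
    and c1: "eis_coprime x y" and c2: "eis_coprime x w"
  shows "eis_coprime x (y * w)"
proof -
  obtain s t where st: "s \<in> Eis" "t \<in> Eis" "s * x + t * y = 1" using coprime_bezout[OF x y nz c1] by blast
  obtain s' t' where st': "s' \<in> Eis" "t' \<in> Eis" "s' * x + t' * w = 1" using coprime_bezout[OF x w nz c2] by blast
  have "(s * x + t * y) * (s' * x + t' * w) = 1" using st st' by simp
  then have "(s * s' * x + s * t' * w + t * y * s') * x + (t * t') * (y * w) = 1"
    by (simp add: algebra_simps)
  then show ?thesis using st st' x y w by (intro bezout_coprime[of "s * s' * x + s * t' * w + t * y * s'" "t * t'"]) auto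
qed

lemma euclid:
  assumes d: "d \<in> Eis" and e: "e \<in> Eis" and f: "f \<in> Eis" and nz: "d \<noteq> 0"
    and c: "eis_coprime d e" and dv: "eis_dvd d (e * f)"
  shows "eis_dvd d f"
proof -
  obtain s t where st: "s \<in> Eis" "t \<in> Eis" "s * d + t * e = 1" using coprime_bezout[OF d e nz c] by blast
  obtain k where k: "k \<in> Eis" "e * f = d * k" using dv by (auto simp: eis_dvd_def)
  have "f = (s * d + t * e) * f" using st by simp
  also have "\<dots> = d * (s * f + t * k)" using k by (simp add: algebra_simps)
  finally show ?thesis using d f st k by (intro dvdI[of d "s * f + t * k"]) auto
qed

lemma assoc_unit:
  assumes ab: "eis_dvd a b" and ba: "eis_dvd b a" and nz: "a \<noteq> 0"
  shows "\<exists>w. eis_unit w \<and> b = w * a"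
proof -
  obtain k where k: "k \<in> Eis" "b = a * k" using ab by (auto simp: eis_dvd_def)
  obtain l where l: "l \<in> Eis" "a = b * l" using ba by (auto simp: eis_dvd_def)
  have e: "a * (k * l) = a" by (metis k(2) l(2) mult.assoc)
  have "k * l = 1" using e nz by (metis mult.right_neutral mult_left_cancel)
  then have "eis_unit k" unfolding eis_unit_def using k l by (intro dvdI[of k l]) auto
  then show ?thesis using k by (intro exI[of _ k]) (simp add: mult.commute)
qed

lemma nonunit_nrm:
  assumes "z \<in> Eis" "z \<noteq> 0" "\<not> eis_unit z"
  shows "nrm z \<ge> 2"
  using nrm_pos[OF assms(1,2)] unit_nrm[OF assms(1)] assms(3) by linarith




lemma my_DeMoivre: "(cis a) ^ n = cis (real n * a)"
proof (induction n)
  case 0 show ?case by simp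
next
  case (Suc n)
  have "cis a ^ Suc n = cis a * cis (real n * a)" using Suc by simp
  also have "\<dots> = cis (a + real n * a)" by (rule cis_mult)
  also have "a + real n * a = real (Suc n) * a" by (simp add: algebra_simps)
  finally show ?case .
qed

lemma rcis_2pi: "rcis r (a + 2*pi) = rcis r a"
  by (simp add: rcis_def cis_mult[symmetric])

lemma arg02pi_bounds: "0 \<le> arg02pi z \<and> arg02pi z < 2*pi"
  using Arg_bounded[of z] by (auto simp: arg02pi_def)

lemma arg02pi_rcis: "z = rcis (cmod z) (arg02pi z)"
  using rcis_cmod_Arg[of z] by (auto simp: arg02pi_def rcis_2pi)

lemma EisA_iff: "z \<in> EisA \<longleftrightarrow> z \<in> Eis \<and> z \<noteq> 0 \<and> (\<exists>r \<phi>. r > 0 \<and> 0 \<le> \<phi> \<and> \<phi> < pi/3 \<and> z = rcis r \<phi>)"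
proof
  assume z: "z \<in> EisA"
  then have "z \<in> Eis" "z \<noteq> 0" "0 \<le> arg02pi z" "arg02pi z < pi/3" by (auto simp: EisA_def)
  moreover have "cmod z > 0" using \<open>z \<noteq> 0\<close> by simp
  ultimately show "z \<in> Eis \<and> z \<noteq> 0 \<and> (\<exists>r \<phi>. r > 0 \<and> 0 \<le> \<phi> \<and> \<phi> < pi/3 \<and> z = rcis r \<phi>)"
    using arg02pi_rcis[of z] by blast
next
  assume "z \<in> Eis \<and> z \<noteq> 0 \<and> (\<exists>r \<phi>. r > 0 \<and> 0 \<le> \<phi> \<and> \<phi> < pi/3 \<and> z = rcis r \<phi>)"
  then obtain r \<phi> where z: "z \<in> Eis" "z \<noteq> 0" "r > 0" "0 \<le> \<phi>" "\<phi> < pi/3" "z = rcis r \<phi>" by blast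
  have "\<phi> \<in> {-pi<..pi}" using z pi_gt_zero by auto
  then have "Arg z = \<phi>" using Arg_rcis z by simp
  then have "arg02pi z = \<phi>" using z by (simp add: arg02pi_def)
  then show "z \<in> EisA" using z by (simp add: EisA_def)
qed

lemma cnj_omega_cis: "cnj omega = cis (- (pi/3))"
  by (simp add: complex_eq_iff omega_def cis.sel cos_60 sin_60)

lemma normalize_ex:
  assumes z: "z \<in> Eis" "z \<noteq> 0"
  shows "\<exists>u. eis_unit u \<and> u * z \<in> EisA"
proof -
  define \<theta> where "\<theta> = arg02pi z"
  define m where "m = \<lfloor>\<theta> / (pi/3)\<rfloor>"
  have th: "0 \<le> \<theta>" using arg02pi_bounds by (simp add: \<theta>_def)
  have p: "pi/3 > 0" by simp
  have m0: "0 \<le> m" unfolding m_def zero_le_floor using th p by simp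
  have m1: "of_int m \<le> \<theta> / (pi/3)" unfolding m_def by (rule of_int_floor_le)
  have m1': "\<theta> / (pi/3) < of_int m + 1" unfolding m_def
    using floor_less_iff[of "\<theta> / (pi/3)" "\<lfloor>\<theta> / (pi/3)\<rfloor> + 1"] by simp
  have m2: "of_int m * (pi/3) \<le> \<theta>" using m1 p by (simp add: pos_le_divide_eq)
  have m3: "\<theta> < (of_int m + 1) * (pi/3)" using m1' p by (simp add: pos_divide_less_eq)
  define k where "k = nat m"
  have k: "real k = of_int m" using m0 by (simp add: k_def)
  define \<phi> where "\<phi> = \<theta> - real k * (pi/3)"
  have ph1: "0 \<le> \<phi>" using m2 unfolding \<phi>_def k by linarith
  have ph2: "\<phi> < pi/3" using m3 unfolding \<phi>_def k by (simp add: algebra_simps)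
  define u where "u = (cnj omega) ^ k"
  have "cis (-(pi/3)) ^ k = cis (real k * (-(pi/3)))" by (rule my_DeMoivre)
  then have u1: "u = cis (- (real k * (pi/3)))" unfolding u_def cnj_omega_cis by simp
  have uE: "u \<in> Eis" unfolding u_def by simp
  have un: "eis_unit u" using uE u1 by (simp add: unit_iff)
  have zz: "rcis (cmod z) \<theta> = z" unfolding \<theta>_def using arg02pi_rcis[of z] by (rule sym)
  have "u * z = rcis 1 (- (real k * (pi/3))) * rcis (cmod z) \<theta>"
    unfolding zz u1 cis_rcis_eq ..
  also have "\<dots> = rcis (cmod z) \<phi>"
    unfolding rcis_mult \<phi>_def by simp
  finally have uz: "u * z = rcis (cmod z) \<phi>" .
  have a: "u * z \<in> Eis" using z uE by simp
  have b: "u * z \<noteq> 0" using z unit_nz[OF un] by simp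
  have c: "cmod z > 0" using z by simp
  have "u * z \<in> EisA" unfolding EisA_iff
    using a b c ph1 ph2 uz by blast
  then show ?thesis using un by blast
qed

lemma int_unit_lemma:
  fixes a b :: int
  assumes n: "a*a + a*b + b*b = 1" and r: "2*a + b > 1"
  shows "a = 1 \<and> b = 0"
proof -
  define c where "c = 2*a + b"
  have c2: "c \<ge> 2" using r by (simp add: c_def)
  have "c * c \<ge> 2 * 2" by (rule mult_mono) (use c2 in auto)
  moreover have "c*c + 3*(b*b) = 4" using n unfolding c_def by (simp add: algebra_simps)
  moreover have "b*b \<ge> 0" by simp
  ultimately have "b * b = 0" "c * c = 4" by linarith+
  then have b: "b = 0" by simp
  then have "a * a = 1" using n by simp
  moreover have "a \<ge> 1" using r b by simp
  moreover have "a \<ge> 2 \<Longrightarrow> a * a \<ge> 2 * 2" by (rule mult_mono) auto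
  ultimately have "a = 1" by linarith
  then show ?thesis using b by simp
qed

lemma unit_re:
  assumes u: "eis_unit u" and re: "Re u > 1/2"
  shows "u = 1"
proof -
  have uE: "u \<in> Eis" using unit_Eis[OF u] .
  then obtain a b :: int where ab: "u = of_int a + of_int b * omega" by (auto simp: Eis_iff)
  have "nrm u = 1" using unit_nrm[OF uE] u by simp
  then have n: "a*a + a*b + b*b = 1" using nrm_repr[OF ab] by simp
  have "Re u = of_int a + of_int b / 2" using ab by (simp add: omega_Re omega_Im)
  then have "(of_int (2*a + b) :: real) > 1" using re by simp
  then have "2*a + b > 1" by linarith
  then have "a = 1 \<and> b = 0" using int_unit_lemma[OF n] by blast
  then show ?thesis using ab by simp
qed

lemma normalize_uniq:
  assumes x: "x \<in> EisA" and u: "eis_unit u" and ux: "u * x \<in> EisA"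
  shows "u = 1"
proof -
  obtain r \<alpha> where ra: "r > 0" "0 \<le> \<alpha>" "\<alpha> < pi/3" "x = rcis r \<alpha>" using x EisA_iff by blast
  obtain s \<beta> where sb: "s > 0" "0 \<le> \<beta>" "\<beta> < pi/3" "u * x = rcis s \<beta>" using ux EisA_iff by blast
  have xnz: "x \<noteq> 0" using ra by simp
  have "u = (u * x) / x" using xnz by simp
  also have "\<dots> = rcis (s/r) (\<beta> - \<alpha>)" using ra(4) sb(4) rcis_divide by simp
  finally have ue: "u = rcis (s/r) (\<beta> - \<alpha>)" .
  have "cmod u = 1" using u unit_iff by simp
  then have "\<bar>s/r\<bar> = 1" using ue sb(1) ra(1) by simp
  then have "s/r = 1" using ra sb by simp
  then have ue2: "Re u = cos (\<beta> - \<alpha>)" using ue by simp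
  have "\<bar>\<beta> - \<alpha>\<bar> < pi/3" unfolding abs_less_iff using ra(2,3) sb(2,3) by linarith
  then have "cos (pi/3) < cos \<bar>\<beta> - \<alpha>\<bar>" by (intro cos_monotone_0_pi) auto
  then have "Re u > 1/2" using ue2 cos_60 by simp
  then show ?thesis using unit_re[OF u] by blast
qed

definition nz :: "complex \<Rightarrow> complex" where
  "nz x = (SOME y. y \<in> EisA \<and> (\<exists>u. eis_unit u \<and> y = u * x))"

lemma nz_prop:
  assumes "x \<in> Eis" "x \<noteq> 0"
  shows "nz x \<in> EisA \<and> (\<exists>u. eis_unit u \<and> nz x = u * x)"
proof -
  obtain u where "eis_unit u" "u * x \<in> EisA" using normalize_ex[OF assms] by blast
  then have "\<exists>y. y \<in> EisA \<and> (\<exists>u. eis_unit u \<and> y = u * x)" by blast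
  then show ?thesis unfolding nz_def by (rule someI_ex)
qed

lemma assocA:
  assumes "y \<in> EisA" "y' \<in> EisA" "eis_unit w" "y' = w * y"
  shows "y' = y"
  using normalize_uniq[of y w] assms by simp

lemma nz_assoc:
  assumes x: "x \<in> EisA" and w: "eis_unit w"
  shows "nz (w * x) = x"
proof -
  have xE: "x \<in> Eis" "x \<noteq> 0" using x by (auto simp: EisA_def)
  have "w * x \<in> Eis" "w * x \<noteq> 0" using xE unit_Eis[OF w] unit_nz[OF w] by auto
  then obtain u where u: "nz (w * x) \<in> EisA" "eis_unit u" "nz (w * x) = u * (w * x)" using nz_prop by blast
  have "nz (w * x) = (u * w) * x" using u(3) by (simp add: mult.assoc)
  then show ?thesis using assocA[OF x u(1) unit_mult[OF u(2) w]] by simp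
qed

lemma nz_self: "x \<in> EisA \<Longrightarrow> nz x = x"
  using nz_assoc[of x 1] by simp

lemma one_EisA: "1 \<in> EisA"
  by (simp add: EisA_def arg02pi_def)




definition U :: "complex \<Rightarrow> complex set" where "U z = {x. unitary_div x z}"
definition D :: "complex \<Rightarrow> real" where "D z = (\<Sum>x\<in>U z. (cmod x)^2)"

lemma EisA_E: "x \<in> EisA \<Longrightarrow> x \<in> Eis \<and> x \<noteq> 0"
  by (simp add: EisA_def)

lemma U_iff:
  assumes z: "z \<in> Eis"
  shows "x \<in> U z \<longleftrightarrow> x \<in> EisA \<and> (\<exists>y\<in>Eis. z = x * y \<and> eis_coprime x y)"
proof
  assume "x \<in> U z"
  then have x: "x \<in> EisA" "eis_dvd x z" "eis_coprime x (z / x)" by (auto simp: U_def unitary_div_def)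
  obtain y where y: "y \<in> Eis" "z = x * y" using x(2) by (auto simp: eis_dvd_def)
  have "z / x = y" using y EisA_E[OF x(1)] by simp
  then show "x \<in> EisA \<and> (\<exists>y\<in>Eis. z = x * y \<and> eis_coprime x y)" using x y by auto
next
  assume "x \<in> EisA \<and> (\<exists>y\<in>Eis. z = x * y \<and> eis_coprime x y)"
  then obtain y where x: "x \<in> EisA" "y \<in> Eis" "z = x * y" "eis_coprime x y" by blast
  have "z / x = y" using x EisA_E[OF x(1)] by simp
  moreover have "eis_dvd x z" using x EisA_E[OF x(1)] by (intro dvdI[of x y]) auto
  ultimately show "x \<in> U z" using x by (simp add: U_def unitary_div_def)
qed

lemma U_memI: "z \<in> Eis \<Longrightarrow> x \<in> EisA \<Longrightarrow> y \<in> Eis \<Longrightarrow> z = x * y \<Longrightarrow> eis_coprime x y \<Longrightarrow> x \<in> U z"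
  using U_iff by blast

lemma coprime_1: "eis_coprime 1 y"
  unfolding eis_coprime_def eis_unit_def by blast

lemma nz_form:
  assumes "x \<in> Eis" "x \<noteq> 0"
  shows "\<exists>u v. eis_unit u \<and> eis_unit v \<and> u * v = 1 \<and> nz x = u * x \<and> nz x \<in> EisA"
proof -
  obtain u where u: "nz x \<in> EisA" "eis_unit u" "nz x = u * x" using nz_prop[OF assms] by blast
  obtain v where v: "eis_unit v" "u * v = 1" using unit_inv[OF u(2)] by blast
  show ?thesis using u v by blast
qed

lemma cmod_nz: "x \<in> Eis \<Longrightarrow> x \<noteq> 0 \<Longrightarrow> cmod (nz x) = cmod x"
  using nz_form[of x] by (auto simp: unit_iff norm_mult)

lemma U_unit:
  assumes z: "z \<in> Eis" and u: "eis_unit z"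
  shows "U z = {1}"
proof
  show "U z \<subseteq> {1}"
  proof
    fix x assume "x \<in> U z"
    then obtain y where x: "x \<in> EisA" "y \<in> Eis" "z = x * y" using U_iff[OF z] by blast
    have "eis_dvd x z" using x EisA_E[OF x(1)] by (intro dvdI[of x y]) auto
    then have "eis_unit x" using dvd_unit_is_unit u by blast
    then have "x = 1" using normalize_uniq[OF one_EisA, of x] x(1) by simp
    then show "x \<in> {1}" by simp
  qed
next
  show "{1} \<subseteq> U z" using U_memI[OF z one_EisA z _ coprime_1] by simp
qed

definition nosplit :: "complex \<Rightarrow> bool" where
  "nosplit z \<longleftrightarrow> \<not> (\<exists>a b. a \<in> Eis \<and> b \<in> Eis \<and> \<not> eis_unit a \<and> \<not> eis_unit b \<and> z = a * b \<and> eis_coprime a b)"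

lemma U_nosplit:
  assumes z: "z \<in> Eis" "z \<noteq> 0" and nu: "\<not> eis_unit z" and ns: "nosplit z"
  shows "U z = {1, nz z}" and "nz z \<noteq> 1"
proof -
  obtain u v where uv: "eis_unit u" "eis_unit v" "u * v = 1" "nz z = u * z" "nz z \<in> EisA"
    using nz_form[OF z] by blast
  show "nz z \<noteq> 1"
  proof
    assume "nz z = 1"
    then have "1 = z * u" using uv by (simp add: mult.commute)
    then have "eis_unit z" unfolding eis_unit_def using z unit_Eis[OF uv(1)] by (intro dvdI[of z u]) auto
    then show False using nu by simp
  qed
  show "U z = {1, nz z}"
  proof
    show "U z \<subseteq> {1, nz z}"
    proof
      fix x assume "x \<in> U z"
      then obtain y where x: "x \<in> EisA" "y \<in> Eis" "z = x * y" "eis_coprime x y" using U_iff[OF z(1)] by blast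
      have xE: "x \<in> Eis" "x \<noteq> 0" using EisA_E[OF x(1)] by auto
      consider "eis_unit x" | "eis_unit y" | "\<not> eis_unit x \<and> \<not> eis_unit y" by blast
      then show "x \<in> {1, nz z}"
      proof cases
        case 1
        then have "x = 1" using normalize_uniq[OF one_EisA, of x] x(1) by simp
        then show ?thesis by simp
      next
        case 2
        have "nz z = (u * y) * x" using uv(4) x(3) by (simp add: algebra_simps)
        then have "nz z = x" using assocA[OF x(1) uv(5) unit_mult[OF uv(1) 2]] by simp
        then show ?thesis by simp
      next
        case 3
        then have False using ns x xE unfolding nosplit_def by blast
        then show ?thesis ..
      qed
    qed
  next
    have "1 \<in> U z" using U_memI[OF z(1) one_EisA z(1) _ coprime_1] by simp
    moreover have "nz z \<in> U z"
    proof (rule U_memI[OF z(1) uv(5), of v])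
      show "v \<in> Eis" using unit_Eis[OF uv(2)] .
      show "z = nz z * v" using uv(3,4) by (simp add: algebra_simps)
      show "eis_coprime (nz z) v" using coprime_unit[OF uv(2)] .
    qed
    ultimately show "{1, nz z} \<subseteq> U z" by simp
  qed
qed




lemma split_into:
  assumes a: "a \<in> Eis" and b: "b \<in> Eis" and z: "z = a * b" and zn: "z \<noteq> 0" and c: "eis_coprime a b"
    and d: "d \<in> U a" and e: "e \<in> U b"
  shows "nz (d * e) \<in> U z"
proof -
  obtain d' where d': "d \<in> EisA" "d' \<in> Eis" "a = d * d'" "eis_coprime d d'" using d U_iff[OF a] by blast
  obtain e' where e': "e \<in> EisA" "e' \<in> Eis" "b = e * e'" "eis_coprime e e'" using e U_iff[OF b] by blast
  have dE: "d \<in> Eis" "d \<noteq> 0" and eE: "e \<in> Eis" "e \<noteq> 0" using EisA_E d'(1) e'(1) by auto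
  have an: "a \<noteq> 0" and bn: "b \<noteq> 0" using zn z by auto
  have d'n: "d' \<noteq> 0" and e'n: "e' \<noteq> 0" using an bn d'(3) e'(3) by auto
  have deE: "d * e \<in> Eis" "d * e \<noteq> 0" using dE eE by auto
  obtain u v where uv: "eis_unit u" "eis_unit v" "u * v = 1" "nz (d*e) = u * (d*e)" "nz (d*e) \<in> EisA"
    using nz_form[OF deE] by blast
  have da: "eis_dvd d a" using d' dE by (intro dvdI[of d d']) auto
  have e'b: "eis_dvd e' b" using e' eE by (intro dvdI[of e' e]) (auto simp: mult.commute)
  have eb: "eis_dvd e b" using e' eE by (intro dvdI[of e e']) auto
  have d'a: "eis_dvd d' a" using d' dE by (intro dvdI[of d' d]) (auto simp: mult.commute)
  have c1: "eis_coprime d e'" using coprime_dvd[OF c da e'b] .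
  have c2: "eis_coprime e d'" using coprime_dvd[OF coprime_sym[OF c] eb d'a] .
  have cd: "eis_coprime d (d' * e')" using coprime_mult[OF dE(1) d'(2) e'(2) dE(2) d'(4) c1] .
  have ce: "eis_coprime e (d' * e')" using coprime_mult[OF eE(1) d'(2) e'(2) eE(2) c2 e'(4)] .
  have d'e'E: "d' * e' \<in> Eis" "d' * e' \<noteq> 0" using d'(2) e'(2) d'n e'n by auto
  have "eis_coprime (d' * e') (d * e)"
    using coprime_mult[OF d'e'E(1) dE(1) eE(1) d'e'E(2) coprime_sym[OF cd] coprime_sym[OF ce]] .
  then have "eis_coprime (d * e) (d' * e')" by (rule coprime_sym)
  then have "eis_coprime (u * (d * e)) (v * (d' * e'))"
    using coprime_unit_left coprime_unit_right uv deE d'e'E by blast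
  moreover have "z = (u * (d * e)) * (v * (d' * e'))"
  proof -
    have "(u * (d * e)) * (v * (d' * e')) = (u * v) * ((d * d') * (e * e'))" by (simp add: algebra_simps)
    then show ?thesis using uv(3) d'(3) e'(3) z by simp
  qed
  moreover have "v * (d' * e') \<in> Eis" using unit_Eis[OF uv(2)] d'e'E by simp
  moreover have zE: "z \<in> Eis" using a b z by simp
  ultimately have A: "u * (d * e) \<in> U z" using U_memI[of z "u * (d * e)" "v * (d' * e')"] uv(4,5) by simp
  show ?thesis using A uv(4) by simp
qed

lemma split_inj_aux:
  assumes a: "a \<in> Eis" and b: "b \<in> Eis" and c: "eis_coprime a b"
    and d: "d \<in> U a" and e: "e \<in> U b" and d1: "d1 \<in> U a" and e1: "e1 \<in> U b"
    and w: "eis_unit w" and eq: "d * e = w * (d1 * e1)"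
  shows "eis_dvd d d1"
proof -
  have dA: "d \<in> EisA" "eis_dvd d a" using d U_iff[OF a] EisA_E by (auto intro: dvdI)
  have e1A: "e1 \<in> EisA" "eis_dvd e1 b" using e1 U_iff[OF b] EisA_E by (auto intro: dvdI)
  have d1E: "d1 \<in> Eis" using d1 U_iff[OF a] EisA_E by blast
  have dE: "d \<in> Eis" "d \<noteq> 0" and eE: "e \<in> Eis" and e1E: "e1 \<in> Eis"
    using dA(1) e U_iff[OF b] e1A(1) EisA_E by auto
  have "eis_coprime d e1" using coprime_dvd[OF c dA(2) e1A(2)] .
  then have cc: "eis_coprime d (w * e1)" using coprime_unit_right w e1E by blast
  have "eis_dvd d (d * e)" using dE eE by (intro dvdI[of d e]) auto
  then have "eis_dvd d ((w * e1) * d1)" using eq by (simp add: algebra_simps)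
  then show ?thesis using euclid[OF dE(1) _ d1E dE(2) cc] unit_Eis[OF w] e1E by simp
qed

lemma split_inj:
  assumes a: "a \<in> Eis" and b: "b \<in> Eis" and c: "eis_coprime a b"
    and d: "d \<in> U a" and e: "e \<in> U b" and d1: "d1 \<in> U a" and e1: "e1 \<in> U b"
    and eq: "nz (d * e) = nz (d1 * e1)"
  shows "d = d1 \<and> e = e1"
proof -
  have dA: "d \<in> EisA" using d U_iff[OF a] by blast
  have d1A: "d1 \<in> EisA" using d1 U_iff[OF a] by blast
  have eA: "e \<in> EisA" using e U_iff[OF b] by blast
  have e1A: "e1 \<in> EisA" using e1 U_iff[OF b] by blast
  note EE = EisA_E[OF dA] EisA_E[OF d1A] EisA_E[OF eA] EisA_E[OF e1A]
  have de: "d * e \<in> Eis" "d * e \<noteq> 0" "d1 * e1 \<in> Eis" "d1 * e1 \<noteq> 0" using EE by auto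
  obtain u v where uv: "eis_unit u" "eis_unit v" "u * v = 1" "nz (d*e) = u * (d*e)"
    using nz_form[OF de(1,2)] by blast
  obtain u1 v1 where uv1: "eis_unit u1" "eis_unit v1" "u1 * v1 = 1" "nz (d1*e1) = u1 * (d1*e1)"
    using nz_form[OF de(3,4)] by blast
  have eq1: "d * e = (v * u1) * (d1 * e1)"
  proof -
    have "d * e = v * (u * (d * e))" using uv(3) by (simp add: algebra_simps)
    also have "\<dots> = v * (u1 * (d1 * e1))" using eq uv(4) uv1(4) by simp
    finally show ?thesis by (simp add: algebra_simps)
  qed
  have eq2: "d1 * e1 = (v1 * u) * (d * e)"
  proof -
    have "d1 * e1 = v1 * (u1 * (d1 * e1))" using uv1(3) by (simp add: algebra_simps)
    also have "\<dots> = v1 * (u * (d * e))" using eq uv(4) uv1(4) by simp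
    finally show ?thesis by (simp add: algebra_simps)
  qed
  have w1: "eis_unit (v * u1)" using unit_mult uv uv1 by blast
  have w2: "eis_unit (v1 * u)" using unit_mult uv uv1 by blast
  have "eis_dvd d d1" using split_inj_aux[OF a b c d e d1 e1 w1 eq1] .
  moreover have "eis_dvd d1 d" using split_inj_aux[OF a b c d1 e1 d e w2 eq2] .
  ultimately obtain w where w: "eis_unit w" "d1 = w * d" using assoc_unit EE by blast
  have dd: "d1 = d" using assocA[OF dA d1A w] .
  have "d * e = d * ((v * u1) * e1)" using eq1 dd by (simp add: algebra_simps)
  then have "e = (v * u1) * e1" using EE by simp
  then have "e = e1" using assocA[OF e1A eA w1] by simp
  then show ?thesis using dd by simp
qed

lemma split_surj:
  assumes a: "a \<in> Eis" and b: "b \<in> Eis" and z: "z = a * b" and zn: "z \<noteq> 0" and c: "eis_coprime a b"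
    and x: "x \<in> U z"
  shows "\<exists>d e. d \<in> U a \<and> e \<in> U b \<and> x = nz (d * e)"
proof -
  have zE: "z \<in> Eis" using a b z by simp
  obtain y where xy: "x \<in> EisA" "y \<in> Eis" "z = x * y" "eis_coprime x y" using x U_iff[OF zE] by blast
  have xE: "x \<in> Eis" "x \<noteq> 0" using EisA_E[OF xy(1)] by auto
  obtain g s t where g: "g \<in> Eis" "s \<in> Eis" "t \<in> Eis" "g = s*x + t*a" "g \<noteq> 0" "eis_dvd g x" "eis_dvd g a"
    using eis_gcd[OF xE(1) a xE(2)] by blast
  obtain h where h: "h \<in> Eis" "x = g * h" using g(6) by (auto simp: eis_dvd_def)
  obtain a' where a': "a' \<in> Eis" "a = g * a'" using g(7) by (auto simp: eis_dvd_def)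
  have hn: "h \<noteq> 0" using h xE by auto
  have "g * (s * h + t * a') = s * (g * h) + t * (g * a')" by (simp add: algebra_simps)
  also have "\<dots> = s * x + t * a" using h(2) a'(2) by simp
  also have "\<dots> = g * 1" using g(4) by simp
  finally have "g * (s * h + t * a') = g * 1" .
  then have "s * h + t * a' = 1" by (rule mult_left_cancel[OF g(5), THEN iffD1])
  then have cha: "eis_coprime h a'" using bezout_coprime g(2,3) by blast
  have "g * (a' * b) = a * b" using a'(2) by (simp add: algebra_simps)
  also have "\<dots> = x * y" using z xy(3) by simp
  also have "\<dots> = g * (h * y)" using h(2) by (simp add: algebra_simps)
  finally have "g * (a' * b) = g * (h * y)" .
  then have hy: "a' * b = h * y" by (rule mult_left_cancel[OF g(5), THEN iffD1])
  have "eis_dvd h (a' * b)" using hy h xy(2) a' b by (intro dvdI[of h y]) auto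
  then have "eis_dvd h b" using euclid[OF h(1) a'(1) b hn cha] by simp
  then obtain b' where b': "b' \<in> Eis" "b = h * b'" by (auto simp: eis_dvd_def)
  have "h * (a' * b') = a' * (h * b')" by (simp add: algebra_simps)
  also have "\<dots> = a' * b" using b'(2) by simp
  also have "\<dots> = h * y" by (rule hy)
  finally have "h * (a' * b') = h * y" .
  then have "a' * b' = y" by (rule mult_left_cancel[OF hn, THEN iffD1])
  then have ya: "y = a' * b'" by (rule sym)
  have ga: "eis_coprime g a'"
    using coprime_dvd[OF xy(4) g(6)] dvd_factorL[OF a'(1) b'(1)] ya by simp
  have hb: "eis_coprime h b'"
  proof -
    have "eis_dvd h x" using dvd_factorR[OF g(1) h(1)] h(2) by simp
    moreover have "eis_dvd b' y" using dvd_factorR[OF a'(1) b'(1)] ya by simp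
    ultimately show ?thesis using coprime_dvd[OF xy(4)] by blast
  qed
  obtain ug vg where ug: "eis_unit ug" "eis_unit vg" "ug * vg = 1" "nz g = ug * g" "nz g \<in> EisA"
    using nz_form[OF g(1,5)] by blast
  obtain uh vh where uh: "eis_unit uh" "eis_unit vh" "uh * vh = 1" "nz h = uh * h" "nz h \<in> EisA"
    using nz_form[OF h(1) hn] by blast
  have A: "nz g \<in> U a"
  proof (rule U_memI[OF a ug(5), of "vg * a'"])
    show "vg * a' \<in> Eis" using unit_Eis[OF ug(2)] a'(1) by simp
    show "a = nz g * (vg * a')"
    proof -
      have "nz g * (vg * a') = (ug * vg) * (g * a')" using ug(4) by (simp add: algebra_simps)
      also have "\<dots> = a" using ug(3) a'(2) by simp
      finally show ?thesis by (rule sym)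
    qed
    show "eis_coprime (nz g) (vg * a')"
      using coprime_unit_left[OF coprime_unit_right[OF ga ug(2) a'(1)] ug(1) g(1)] ug(4) by simp
  qed
  moreover have B: "nz h \<in> U b"
  proof (rule U_memI[OF b uh(5), of "vh * b'"])
    show "vh * b' \<in> Eis" using unit_Eis[OF uh(2)] b'(1) by simp
    show "b = nz h * (vh * b')"
    proof -
      have "nz h * (vh * b') = (uh * vh) * (h * b')" using uh(4) by (simp add: algebra_simps)
      also have "\<dots> = b" using uh(3) b'(2) by simp
      finally show ?thesis by (rule sym)
    qed
    show "eis_coprime (nz h) (vh * b')"
      using coprime_unit_left[OF coprime_unit_right[OF hb uh(2) b'(1)] uh(1) h(1)] uh(4) by simp
  qed
  moreover have C: "nz (nz g * nz h) = x"
  proof -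
    have "nz g * nz h = (ug * uh) * x" using ug(4) uh(4) h(2) by (simp add: algebra_simps)
    then show ?thesis using nz_assoc[OF xy(1) unit_mult[OF ug(1) uh(1)]] by simp
  qed
  show ?thesis using A B C[symmetric] by (intro exI[of _ "nz g"] exI[of _ "nz h"]) simp
qed

lemma split_bij:
  assumes a: "a \<in> Eis" and b: "b \<in> Eis" and z: "z = a * b" and zn: "z \<noteq> 0" and c: "eis_coprime a b"
  shows "bij_betw (\<lambda>p. nz (fst p * snd p)) (U a \<times> U b) (U z)"
  unfolding bij_betw_def
proof (intro conjI)
  show "inj_on (\<lambda>p. nz (fst p * snd p)) (U a \<times> U b)"
    unfolding inj_on_def using split_inj[OF a b c] by auto
  show "(\<lambda>p. nz (fst p * snd p)) ` (U a \<times> U b) = U z"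
  proof
    show "(\<lambda>p. nz (fst p * snd p)) ` (U a \<times> U b) \<subseteq> U z"
      using split_into[OF a b z zn c] by auto
    show "U z \<subseteq> (\<lambda>p. nz (fst p * snd p)) ` (U a \<times> U b)"
    proof
      fix x assume "x \<in> U z"
      then obtain d e where "d \<in> U a" "e \<in> U b" "x = nz (d * e)" using split_surj[OF a b z zn c] by blast
      then show "x \<in> (\<lambda>p. nz (fst p * snd p)) ` (U a \<times> U b)" by force
    qed
  qed
qed




lemma D_split:
  assumes a: "a \<in> Eis" and b: "b \<in> Eis" and z: "z = a * b" and zn: "z \<noteq> 0" and c: "eis_coprime a b"
  shows "D z = D a * D b"
proof -
  have bij: "bij_betw (\<lambda>p. nz (fst p * snd p)) (U a \<times> U b) (U z)" by (rule split_bij[OF a b z zn c])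
  have "D z = (\<Sum>p\<in>U a \<times> U b. (cmod (nz (fst p * snd p)))^2)"
    unfolding D_def by (rule sum.reindex_bij_betw[OF bij, symmetric])
  also have "\<dots> = (\<Sum>p\<in>U a \<times> U b. (cmod (fst p))^2 * (cmod (snd p))^2)"
  proof (rule sum.cong[OF refl])
    fix p assume p: "p \<in> U a \<times> U b"
    have "fst p \<in> EisA" "snd p \<in> EisA" using p U_iff[OF a] U_iff[OF b] by auto
    then have "fst p * snd p \<in> Eis" "fst p * snd p \<noteq> 0" using EisA_E by auto
    then show "(cmod (nz (fst p * snd p)))^2 = (cmod (fst p))^2 * (cmod (snd p))^2"
      using cmod_nz by (simp add: norm_mult power_mult_distrib)
  qed
  also have "\<dots> = (\<Sum>d\<in>U a. \<Sum>e\<in>U b. (cmod d)^2 * (cmod e)^2)"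
    by (simp add: sum.cartesian_product case_prod_beta)
  also have "\<dots> = D a * D b" unfolding D_def by (simp add: sum_product)
  finally show ?thesis .
qed

lemma not3_mult: "\<not> 3 dvd (k::int) \<Longrightarrow> \<not> 3 dvd l \<Longrightarrow> \<not> 3 dvd (k * l)"
proof -
  assume k: "\<not> 3 dvd k" and l: "\<not> 3 dvd l"
  have k': "k mod 3 = 1 \<or> k mod 3 = 2" using k by (auto simp: dvd_eq_mod_eq_0)
  have l': "l mod 3 = 1 \<or> l mod 3 = 2" using l by (auto simp: dvd_eq_mod_eq_0)
  have "(k * l) mod 3 = ((k mod 3) * (l mod 3)) mod 3" by (rule mod_mult_eq[symmetric])
  then have "(k * l) mod 3 \<noteq> 0" using k' l' by auto
  then show ?thesis by (simp add: dvd_eq_mod_eq_0)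
qed

lemma main_aux:
  "\<forall>z. z \<in> Eis \<longrightarrow> z \<noteq> 0 \<longrightarrow> nat (nrm z) = n \<longrightarrow> finite (U z) \<and> (\<exists>k::int. D z = of_int k \<and> \<not> 3 dvd k)"
proof (induction n rule: less_induct)
  case (less n)
  show ?case
  proof (intro allI impI)
    fix z assume z: "z \<in> Eis" "z \<noteq> 0" and n: "nat (nrm z) = n"
    consider "eis_unit z" | "\<not> eis_unit z" "nosplit z" | "\<not> eis_unit z" "\<not> nosplit z" by blast
    then show "finite (U z) \<and> (\<exists>k::int. D z = of_int k \<and> \<not> 3 dvd k)"
    proof cases
      case 1
      have "U z = {1}" by (rule U_unit[OF z(1) 1])
      then have "finite (U z)" "D z = of_int 1" by (simp_all add: D_def)
      then show ?thesis by (intro conjI exI[of _ 1]) auto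
    next
      case 2
      have Uz: "U z = {1, nz z}" and ne: "nz z \<noteq> 1" using U_nosplit[OF z 2] by auto
      have "D z = 1 + (cmod (nz z))^2" unfolding D_def Uz using ne by simp
      also have "\<dots> = of_int (1 + nrm z)" using cmod_nz[OF z] nrm_eq[OF z(1)] by simp
      finally have De: "D z = of_int (1 + nrm z)" .
      have m: "(1 + nrm z) mod 3 = (1 + nrm z mod 3) mod 3" by (rule mod_add_right_eq[symmetric])
      have "(1 + nrm z) mod 3 \<noteq> 0" using nrm_mod3[OF z(1)] unfolding m by auto
      then have "\<not> 3 dvd (1 + nrm z)" by (simp add: dvd_eq_mod_eq_0)
      then show ?thesis using Uz De by (intro conjI exI[of _ "1 + nrm z"]) auto
    next
      case 3
      then obtain a b where ab: "a \<in> Eis" "b \<in> Eis" "\<not> eis_unit a" "\<not> eis_unit b" "z = a * b" "eis_coprime a b"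
        unfolding nosplit_def by blast
      have an: "a \<noteq> 0" and bn: "b \<noteq> 0" using ab(5) z(2) by auto
      have na: "nrm a \<ge> 2" using nonunit_nrm[OF ab(1) an ab(3)] .
      have nb: "nrm b \<ge> 2" using nonunit_nrm[OF ab(2) bn ab(4)] .
      have nz': "nrm z = nrm a * nrm b" using nrm_mult[OF ab(1,2)] ab(5) by simp
      have "nrm a * 1 < nrm a * nrm b" using na nb by (intro mult_strict_left_mono) auto
      then have ia: "nrm a < nrm z" unfolding nz' by simp
      have "1 * nrm b < nrm a * nrm b" using na nb by (intro mult_strict_right_mono) auto
      then have ib: "nrm b < nrm z" unfolding nz' by simp
      have lta: "nat (nrm a) < n" unfolding n[symmetric] using ia na by (simp add: nat_less_eq_zless)
      have ltb: "nat (nrm b) < n" unfolding n[symmetric] using ib nb by (simp add: nat_less_eq_zless)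
      obtain ka where ka: "finite (U a)" "D a = of_int ka" "\<not> 3 dvd ka"
        using less.IH[OF lta] ab(1) an by blast
      obtain kb where kb: "finite (U b)" "D b = of_int kb" "\<not> 3 dvd kb"
        using less.IH[OF ltb] ab(2) bn by blast
      have bij: "bij_betw (\<lambda>p. nz (fst p * snd p)) (U a \<times> U b) (U z)"
        by (rule split_bij[OF ab(1,2,5) z(2) ab(6)])
      have fin: "finite (U z)" using bij ka(1) kb(1) bij_betw_finite by blast
      have "D z = of_int (ka * kb)" using D_split[OF ab(1,2,5) z(2) ab(6)] ka kb by simp
      then show ?thesis using fin not3_mult[OF ka(3) kb(3)] by blast
    qed
  qed
qed

theorem corollary2p2:
  fixes t :: int
  assumes "t > 0" and "3 dvd t"
  shows "\<not> (\<exists>z\<in>Eis. z \<noteq> 0 \<and> I_star 2 z = of_int t)"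
proof
  assume "\<exists>z\<in>Eis. z \<noteq> 0 \<and> I_star 2 z = of_int t"
  then obtain z where z: "z \<in> Eis" "z \<noteq> 0" "I_star 2 z = of_int t" by blast
  obtain k where k: "D z = of_int k" "\<not> 3 dvd k" using main_aux z(1,2) by blast
  have ds: "delta_star 2 z = D z" unfolding delta_star_def D_def U_def by simp
  have "I_star 2 z = D z / (cmod z)^2" unfolding I_star_def ds by simp
  then have "of_int k / of_int (nrm z) = (of_int t :: real)" using z(3) k(1) nrm_eq[OF z(1)] by simp
  moreover have "nrm z > 0" using nrm_pos[OF z(1,2)] .
  ultimately have "(of_int k :: real) = of_int t * of_int (nrm z)" by (simp add: field_simps)
  then have "k = t * nrm z" by (metis of_int_eq_iff of_int_mult)
  then have "3 dvd k" using assms(2) by simp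
  then show False using k(2) by simp
qed


end
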